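(* Let $G$ be a $K_{2,3}$-saturated graph with vertex set $V$ and let $\alpha \in V$. Define $V_1 = N[\alpha] \cup \{v \in V : |N(v)\cap N(\alpha)| = 2\}$, $\mathcal U_2 = \{v \in V\setminus V_1 : |N(v)\cap N(\alpha)| = 1\}$, and $\mathcal U_3 = V \setminus (V_1\cup \mathcal U_2)$. For $b \in \mathcal U_2$ let $\omega(b) = |N(b)\cap V_1| + \tfrac12 |N(b)\cap \mathcal U_2|$. Let $x^* \in N(\alpha)$ satisfy $|N(x^* )\cap N(\alpha)| \leq 1$. Then: (i) if $y \in \mathcal U_2$ and $x^*$ is the unique common neighbor of $\alpha$ and $y$, then $\omega(y) \geq 1.5$, and if $\omega(y) = 1.5$ then there exist $x \in N(\alpha)\cap N(x^* )$ and $y' \in N(x)$ such that $N(y)\cap \mathcal U_2 = \{y'\}$; (ii) if $z \in \mathcal U_3$, then $$|N(z)\cap (V\setminus \mathcal U_3)| \geq 1 + \big|\{x \in N(\alpha) : N(z)\cap N(x)\cap \mathcal U_2 \neq \emptyset\}\big|.$$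
   Context: All graphs are finite and simple; $N(x)$ is the set of neighbors of $x$ and $N[x] = N(x)\cup\{x\}$. A graph $G$ is $K_{2,3}$-saturated if $G$ contains no subgraph isomorphic to $K_{2,3}$, but for every pair of nonadjacent vertices $u,v$, the graph $G+uv$ contains a subgraph isomorphic to $K_{2,3}$. *)

theory Defs
  imports Complex_Main
begin

definition simple_graph :: "'a set \<Rightarrow> ('a \<Rightarrow> 'a \<Rightarrow> bool) \<Rightarrow> bool" where
  "simple_graph V E \<longleftrightarrow> finite V \<and> (\<forall>x y. E x y \<longrightarrow> x \<in> V \<and> y \<in> V)
     \<and> (\<forall>x y. E x y \<longrightarrow> E y x) \<and> (\<forall>x. \<not> E x x)"

definition nbhd :: "'a set \<Rightarrow> ('a \<Rightarrow> 'a \<Rightarrow> bool) \<Rightarrow> 'a \<Rightarrow> 'a set" where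
  "nbhd V E x = {y \<in> V. E x y}"

definition cnbhd :: "'a set \<Rightarrow> ('a \<Rightarrow> 'a \<Rightarrow> bool) \<Rightarrow> 'a \<Rightarrow> 'a set" where
  "cnbhd V E x = insert x (nbhd V E x)"

definition has_K23 :: "'a set \<Rightarrow> ('a \<Rightarrow> 'a \<Rightarrow> bool) \<Rightarrow> bool" where
  "has_K23 V E \<longleftrightarrow> (\<exists>a\<in>V. \<exists>b\<in>V. \<exists>c\<in>V. \<exists>d\<in>V. \<exists>e\<in>V.
     distinct [a, b, c, d, e] \<and>
     E a c \<and> E a d \<and> E a e \<and> E b c \<and> E b d \<and> E b e)"

definition add_edge :: "('a \<Rightarrow> 'a \<Rightarrow> bool) \<Rightarrow> 'a \<Rightarrow> 'a \<Rightarrow> ('a \<Rightarrow> 'a \<Rightarrow> bool)" where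
  "add_edge E u v = (\<lambda>x y. E x y \<or> (x = u \<and> y = v) \<or> (x = v \<and> y = u))"

definition K23_saturated :: "'a set \<Rightarrow> ('a \<Rightarrow> 'a \<Rightarrow> bool) \<Rightarrow> bool" where
  "K23_saturated V E \<longleftrightarrow> simple_graph V E \<and> \<not> has_K23 V E \<and>
     (\<forall>u\<in>V. \<forall>v\<in>V. u \<noteq> v \<and> \<not> E u v \<longrightarrow> has_K23 V (add_edge E u v))"

end

theory Submission
  imports Defs
begin

lemma mem_N: "y \<in> nbhd V E x \<longleftrightarrow> y \<in> V \<and> E x y" by (simp add: nbhd_def)

lemma card3_obtain:
  assumes "finite S" "card S \<ge> 3"
  shows "\<exists>c d e. c\<in>S \<and> d\<in>S \<and> e\<in>S \<and> c\<noteq>d \<and> c\<noteq>e \<and> d\<noteq>e"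
proof -
  from assms(2) have "Suc 2 \<le> card S" by simp
  then obtain c B where B: "S = insert c B" "c \<notin> B" "2 \<le> card B" "finite B"
    unfolding card_le_Suc_iff by blast
  then have "Suc 1 \<le> card B" by simp
  then obtain d C where C: "B = insert d C" "d \<notin> C" "1 \<le> card C" "finite C"
    unfolding card_le_Suc_iff by blast
  then obtain e where "e \<in> C" by fastforce
  with B C show ?thesis by blast
qed

lemma card2_ge: "finite S \<Longrightarrow> c \<in> S \<Longrightarrow> d \<in> S \<Longrightarrow> c \<noteq> d \<Longrightarrow> card S \<ge> 2"
  by (metis card_2_iff card_mono empty_subsetI insert_subset)

lemma k23_le2:
  assumes sg: "simple_graph V E" and nk: "\<not> has_K23 V E"
    and ab: "a \<in> V" "b \<in> V" "a \<noteq> b"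
  shows "card (nbhd V E a \<inter> nbhd V E b) \<le> 2"
proof (rule ccontr)
  assume "\<not> ?thesis"
  moreover have "finite (nbhd V E a \<inter> nbhd V E b)" using sg by (simp add: simple_graph_def nbhd_def)
  ultimately obtain c d e where cde: "c \<in> nbhd V E a \<inter> nbhd V E b" "d \<in> nbhd V E a \<inter> nbhd V E b"
     "e \<in> nbhd V E a \<inter> nbhd V E b" "c\<noteq>d" "c\<noteq>e" "d\<noteq>e"
    using card3_obtain by (metis not_le_imp_less Suc_leI numeral_2_eq_2 numeral_3_eq_3)
  have irr: "\<And>x. \<not> E x x" using sg by (simp add: simple_graph_def)
  from cde have  "E a c" "E a d" "E a e" "E b c" "E b d" "E b e" "c \<in> V" "d \<in> V" "e \<in> V"
    by (auto simp: mem_N)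
  moreover then have "distinct [a,b,c,d,e]" using cde(4-6) ab irr by auto
  ultimately have "has_K23 V E" unfolding has_K23_def using ab by blast
  with nk show False by simp
qed

lemma sat_pair:
  assumes sat: "K23_saturated V E" and uv: "u \<in> V" "v \<in> V" "u \<noteq> v" "\<not> E u v"
  shows "\<exists>a c b d e. ((a = u \<and> c = v) \<or> (a = v \<and> c = u)) \<and> distinct [a,b,c,d,e] \<and>
     b \<in> V \<and> d \<in> V \<and> e \<in> V \<and>
     E b c \<and> E a d \<and> E a e \<and> E b d \<and> E b e"
proof -
  have sg: "simple_graph V E" and nk: "\<not> has_K23 V E" and h: "has_K23 V (add_edge E u v)"
    using sat uv unfolding K23_saturated_def by auto
  have sym: "\<And>x y. E x y \<Longrightarrow> E y x" using sg by (simp add: simple_graph_def)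
  from h obtain a b c d e where in5: "a\<in>V" "b\<in>V" "c\<in>V" "d\<in>V" "e\<in>V" and dst: "distinct [a,b,c,d,e]"
    and ed: "add_edge E u v a c" "add_edge E u v a d" "add_edge E u v a e"
     "add_edge E u v b c" "add_edge E u v b d" "add_edge E u v b e"
    unfolding has_K23_def by blast
  have new: "(a = u \<and> c = v) \<or> (a = v \<and> c = u) \<or> (a = u \<and> d = v) \<or> (a = v \<and> d = u) \<or>
    (a = u \<and> e = v) \<or> (a = v \<and> e = u) \<or> (b = u \<and> c = v) \<or> (b = v \<and> c = u) \<or>
    (b = u \<and> d = v) \<or> (b = v \<and> d = u) \<or> (b = u \<and> e = v) \<or> (b = v \<and> e = u)"
  proof (rule ccontr)
    assume "\<not> ?thesis"
    then have "E a c" "E a d" "E a e" "E b c" "E b d" "E b e" using ed unfolding add_edge_def by auto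
    then have "has_K23 V E" unfolding has_K23_def using in5 dst by blast
    with nk show False by simp
  qed
  have E': "\<And>x y. add_edge E u v x y \<Longrightarrow> distinct [x,y] \<Longrightarrow> \<not> (x = u \<and> y = v) \<Longrightarrow> \<not> (x = v \<and> y = u) \<Longrightarrow> E x y"
    unfolding add_edge_def by auto
  show ?thesis
    using new
  proof (elim disjE)
    assume "a = u \<and> c = v" then show ?thesis
      apply - apply (rule exI[of _ a], rule exI[of _ c], rule exI[of _ b], rule exI[of _ d], rule exI[of _ e])
      using in5 dst ed uv unfolding add_edge_def by auto
  next
    assume "a = v \<and> c = u" then show ?thesis
      apply - apply (rule exI[of _ a], rule exI[of _ c], rule exI[of _ b], rule exI[of _ d], rule exI[of _ e])
      using in5 dst ed uv unfolding add_edge_def by auto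
  next
    assume "a = u \<and> d = v" then show ?thesis
      apply - apply (rule exI[of _ a], rule exI[of _ d], rule exI[of _ b], rule exI[of _ c], rule exI[of _ e])
      using in5 dst ed uv unfolding add_edge_def by auto
  next
    assume "a = v \<and> d = u" then show ?thesis
      apply - apply (rule exI[of _ a], rule exI[of _ d], rule exI[of _ b], rule exI[of _ c], rule exI[of _ e])
      using in5 dst ed uv unfolding add_edge_def by auto
  next
    assume "a = u \<and> e = v" then show ?thesis
      apply - apply (rule exI[of _ a], rule exI[of _ e], rule exI[of _ b], rule exI[of _ c], rule exI[of _ d])
      using in5 dst ed uv unfolding add_edge_def by auto
  next
    assume "a = v \<and> e = u" then show ?thesis
      apply - apply (rule exI[of _ a], rule exI[of _ e], rule exI[of _ b], rule exI[of _ c], rule exI[of _ d])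
      using in5 dst ed uv unfolding add_edge_def by auto
  next
    assume "b = u \<and> c = v" then show ?thesis
      apply - apply (rule exI[of _ b], rule exI[of _ c], rule exI[of _ a], rule exI[of _ d], rule exI[of _ e])
      using in5 dst ed uv unfolding add_edge_def by auto
  next
    assume "b = v \<and> c = u" then show ?thesis
      apply - apply (rule exI[of _ b], rule exI[of _ c], rule exI[of _ a], rule exI[of _ d], rule exI[of _ e])
      using in5 dst ed uv unfolding add_edge_def by auto
  next
    assume "b = u \<and> d = v" then show ?thesis
      apply - apply (rule exI[of _ b], rule exI[of _ d], rule exI[of _ a], rule exI[of _ c], rule exI[of _ e])
      using in5 dst ed uv unfolding add_edge_def by auto
  next
    assume "b = v \<and> d = u" then show ?thesis
      apply - apply (rule exI[of _ b], rule exI[of _ d], rule exI[of _ a], rule exI[of _ c], rule exI[of _ e])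
      using in5 dst ed uv unfolding add_edge_def by auto
  next
    assume "b = u \<and> e = v" then show ?thesis
      apply - apply (rule exI[of _ b], rule exI[of _ e], rule exI[of _ a], rule exI[of _ c], rule exI[of _ d])
      using in5 dst ed uv unfolding add_edge_def by auto
  next
    assume "b = v \<and> e = u" then show ?thesis
      apply - apply (rule exI[of _ b], rule exI[of _ e], rule exI[of _ a], rule exI[of _ c], rule exI[of _ d])
      using in5 dst ed uv unfolding add_edge_def by auto
  qed
qed
theorem corollary3p3:
  fixes V :: "'a set" and E :: "'a \<Rightarrow> 'a \<Rightarrow> bool" and \<alpha> xs :: 'a
  assumes sat: "K23_saturated V E"
    and alpha: "\<alpha> \<in> V"
    and xs: "xs \<in> nbhd V E \<alpha>" "card (nbhd V E xs \<inter> nbhd V E \<alpha>) \<le> 1"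
  shows
    "let N = nbhd V E;
         V1 = cnbhd V E \<alpha> \<union> {v \<in> V. card (N v \<inter> N \<alpha>) = 2};
         U2 = {v \<in> V - V1. card (N v \<inter> N \<alpha>) = 1};
         U3 = V - (V1 \<union> U2);
         \<omega> = (\<lambda>b. real (card (N b \<inter> V1)) + real (card (N b \<inter> U2)) / 2)
     in (\<forall>y \<in> U2. N \<alpha> \<inter> N y = {xs} \<longrightarrow>
           \<omega> y \<ge> 3/2 \<and>
           (\<omega> y = 3/2 \<longrightarrow> (\<exists>x \<in> N \<alpha> \<inter> N xs. \<exists>y' \<in> N x. N y \<inter> U2 = {y'})))
      \<and> (\<forall>z \<in> U3. card (N z \<inter> (V - U3)) \<ge>
           1 + card {x \<in> N \<alpha>. N z \<inter> N x \<inter> U2 \<noteq> {}})"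
proof -
  define N where "N = nbhd V E"
  define V1 where "V1 = cnbhd V E \<alpha> \<union> {v \<in> V. card (N v \<inter> N \<alpha>) = 2}"
  define U2 where "U2 = {v \<in> V - V1. card (N v \<inter> N \<alpha>) = 1}"
  define U3 where "U3 = V - (V1 \<union> U2)"
  define \<omega> where "\<omega> = (\<lambda>b. real (card (N b \<inter> V1)) + real (card (N b \<inter> U2)) / 2)"
  have sg: "simple_graph V E" and nk: "\<not> has_K23 V E" using sat by (auto simp: K23_saturated_def)
  have sym: "\<And>x y. E x y \<Longrightarrow> E y x" and irr: "\<And>x. \<not> E x x" and fin: "finite V"
    and inV: "\<And>x y. E x y \<Longrightarrow> x \<in> V \<and> y \<in> V"
    using sg by (auto simp: simple_graph_def)
  have mN: "\<And>x y. y \<in> N x \<longleftrightarrow> E x y" unfolding N_def mem_N using inV by blast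
  have finN: "\<And>x. finite (N x)" unfolding N_def nbhd_def using fin by simp
  have le2: "\<And>a. a \<in> V \<Longrightarrow> a \<noteq> \<alpha> \<Longrightarrow> card (N a \<inter> N \<alpha>) \<le> 2"
    unfolding N_def using k23_le2[OF sg nk] alpha by blast
  have V1sub: "V1 \<subseteq> V" unfolding V1_def cnbhd_def nbhd_def using alpha by auto
  have NaV1: "N \<alpha> \<subseteq> V1" unfolding V1_def cnbhd_def N_def by auto
  have U2sub: "U2 \<subseteq> V" unfolding U2_def by auto
  have V1U2: "V1 \<inter> U2 = {}" unfolding U2_def by auto
  have alV1: "\<alpha> \<in> V1" unfolding V1_def cnbhd_def by auto
  have finV1: "finite V1" using V1sub fin finite_subset by auto
  have finU2: "finite U2" using U2sub fin finite_subset by auto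
  have twoV1: "\<And>b d e. b \<in> V \<Longrightarrow> d \<noteq> e \<Longrightarrow> E \<alpha> d \<Longrightarrow> E \<alpha> e \<Longrightarrow> E b d \<Longrightarrow> E b e \<Longrightarrow> b \<in> V1"
  proof -
    fix b d e assume h: "b \<in> V" "d \<noteq> e" "E \<alpha> d" "E \<alpha> e" "E b d" "E b e"
    show "b \<in> V1"
    proof (cases "b = \<alpha>")
      case True then show ?thesis using alV1 by simp
    next
      case False
      have "card (N b \<inter> N \<alpha>) \<ge> 2" using card2_ge[of "N b \<inter> N \<alpha>" d e] h finN mN by auto
      with le2[OF h(1) False] have "card (N b \<inter> N \<alpha>) = 2" by simp
      then show ?thesis unfolding V1_def using h(1) by auto
    qed
  qed
  have nbV12: "\<And>b w. E \<alpha> b \<Longrightarrow> E b w \<Longrightarrow> w \<noteq> \<alpha> \<Longrightarrow> w \<in> V1 \<union> U2"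
  proof -
    fix b w assume h: "E \<alpha> b" "E b w" "w \<noteq> \<alpha>"
    have wV: "w \<in> V" using inV h by blast
    show "w \<in> V1 \<union> U2"
    proof (cases "w \<in> V1")
      case False
      have "b \<in> N w \<inter> N \<alpha>" using h mN sym by auto
      then have "card (N w \<inter> N \<alpha>) \<noteq> 0" using finN by auto
      moreover have "card (N w \<inter> N \<alpha>) \<noteq> 2" using False wV unfolding V1_def by auto
      moreover note le2[OF wV h(3)]
      ultimately have "card (N w \<inter> N \<alpha>) = 1" by linarith
      then show ?thesis unfolding U2_def using False wV by auto
    qed simp
  qed
  have U2uniq: "\<And>u x x'. u \<in> U2 \<Longrightarrow> E \<alpha> x \<Longrightarrow> E \<alpha> x' \<Longrightarrow> E x u \<Longrightarrow> E x' u \<Longrightarrow> x = x'"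
  proof -
    fix u x x' assume h: "u \<in> U2" "E \<alpha> x" "E \<alpha> x'" "E x u" "E x' u"
    then have "card (N u \<inter> N \<alpha>) = 1" unfolding U2_def by auto
    then obtain t where "N u \<inter> N \<alpha> = {t}" by (rule card_1_singletonE)
    moreover have "x \<in> N u \<inter> N \<alpha>" "x' \<in> N u \<inter> N \<alpha>" using h mN sym by auto
    ultimately show "x = x'" by auto
  qed
  have notU2V1: "\<And>v. v \<in> U2 \<Longrightarrow> v \<in> V1 \<Longrightarrow> False" using V1U2 by auto
  have part1: "\<forall>y \<in> U2. N \<alpha> \<inter> N y = {xs} \<longrightarrow>
           \<omega> y \<ge> 3/2 \<and>
           (\<omega> y = 3/2 \<longrightarrow> (\<exists>x \<in> N \<alpha> \<inter> N xs. \<exists>y' \<in> N x. N y \<inter> U2 = {y'}))"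
  proof (intro ballI impI)
    fix y assume yU2: "y \<in> U2" and Ny: "N \<alpha> \<inter> N y = {xs}"
    have yV: "y \<in> V" and ynV1: "y \<notin> V1" using yU2 unfolding U2_def by auto
    have yna: "y \<noteq> \<alpha>" "\<not> E \<alpha> y" using ynV1 alV1 NaV1 mN by auto
    have xsy: "xs \<in> N y" using Ny by auto
    have xsa: "E \<alpha> xs" "E xs y" using Ny xsy mN sym by auto
    have xsV1: "xs \<in> V1" using xsa NaV1 mN by auto
    have cxs: "card (N xs \<inter> N \<alpha>) \<le> 1" using xs N_def by simp
    obtain a c b d e where ac: "(a = \<alpha> \<and> c = y) \<or> (a = y \<and> c = \<alpha>)" and dst: "distinct [a,b,c,d,e]"
      and bV: "b \<in> V" and ed: "E b c" "E a d" "E a e" "E b d" "E b e"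
      using sat_pair[OF sat alpha yV yna(1)[symmetric] yna(2)] by blast
    have cases: "(\<exists>w. w \<in> N y \<and> w \<in> V1 \<and> w \<noteq> xs) \<or>
       (\<exists>w1 w2. w1 \<noteq> w2 \<and> w1 \<in> N y \<and> w2 \<in> N y \<and> w1 \<in> V1 \<union> U2 \<and> w2 \<in> V1 \<union> U2 \<and> w1 \<noteq> xs \<and> w2 \<noteq> xs) \<or>
       (\<exists>x w. E \<alpha> x \<and> E xs x \<and> E x w \<and> w \<in> N y \<and> w \<in> V1 \<union> U2 \<and> w \<noteq> xs)"
      using ac
    proof
      assume h: "a = \<alpha> \<and> c = y"
      have "b \<in> V1" using twoV1[OF bV _ _ _ ed(4) ed(5)] h ed dst by auto
      moreover have "b \<noteq> xs"
      proof
        assume "b = xs"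
        then have "d \<in> N xs \<inter> N \<alpha>" "e \<in> N xs \<inter> N \<alpha>" using h ed mN by auto
        then have "card (N xs \<inter> N \<alpha>) \<ge> 2" using card2_ge[of "N xs \<inter> N \<alpha>" d e] finN dst by auto
        with cxs show False by simp
      qed
      moreover have "b \<in> N y" using ed h sym mN by auto
      ultimately show ?thesis by blast
    next
      assume h: "a = y \<and> c = \<alpha>"
      have dy: "d \<in> N y" "e \<in> N y" using ed h mN by auto
      have d12: "d \<in> V1 \<union> U2" "e \<in> V1 \<union> U2" using nbV12 ed h sym dst by auto
      show ?thesis
      proof (cases "b = xs")
        case True
        then have "d \<noteq> xs" "e \<noteq> xs" using dst by auto
        then show ?thesis using dy d12 dst by auto
      next
        case False
        show ?thesis
        proof (cases "d = xs \<or> e = xs")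
          case True
          then show ?thesis
          proof
            assume "d = xs" then show ?thesis using dy d12 dst ed h sym by (metis distinct_length_2_or_more)
          next
            assume "e = xs" then show ?thesis using dy d12 dst ed h sym by (metis distinct_length_2_or_more)
          qed
        next
          case False then show ?thesis using dy d12 dst by auto
        qed
      qed
    qed
    define c1 where "c1 = card (N y \<inter> V1)"
    define c2 where "c2 = card (N y \<inter> U2)"
    have om: "\<omega> y = real c1 + real c2 / 2" unfolding \<omega>_def c1_def c2_def by simp
    have c1ge: "c1 \<ge> 1" unfolding c1_def using xsy xsV1 finN
      by (metis IntI One_nat_def Suc_leI card_gt_0_iff empty_iff finite_Int)
    have extra: "\<exists>w. w \<in> N y \<and> w \<in> V1 \<union> U2 \<and> w \<noteq> xs" using cases by blast
    have ge: "\<omega> y \<ge> 3/2"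
    proof -
      from extra obtain w where w: "w \<in> N y" "w \<in> V1 \<union> U2" "w \<noteq> xs" by blast
      show ?thesis
      proof (cases "w \<in> V1")
        case True
        then have "c1 \<ge> 2" unfolding c1_def using card2_ge[of "N y \<inter> V1" w xs] w xsy xsV1 finN by auto
        then show ?thesis unfolding om by simp
      next
        case False
        then have "w \<in> N y \<inter> U2" using w by auto
        then have "c2 \<ge> 1" unfolding c2_def using finN
          by (metis One_nat_def Suc_leI card_gt_0_iff empty_iff finite_Int)
        then show ?thesis unfolding om using c1ge by simp
      qed
    qed
    moreover have "\<omega> y = 3/2 \<longrightarrow> (\<exists>x \<in> N \<alpha> \<inter> N xs. \<exists>y' \<in> N x. N y \<inter> U2 = {y'})"
    proof
      assume eq: "\<omega> y = 3/2"
      have "c1 = 1 \<and> c2 = 1"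
      proof -
        have "real c1 + real c2 / 2 = 3/2" using eq om by simp
        then have "2 * c1 + c2 = 3" by linarith
        with c1ge show ?thesis by presburger
      qed
      then obtain t u where t: "N y \<inter> V1 = {t}" and u: "N y \<inter> U2 = {u}" unfolding c1_def c2_def
        by (meson card_1_singletonE)
      have tx: "N y \<inter> V1 = {xs}" using t xsy xsV1 by auto
      have onlyu: "\<And>w. w \<in> N y \<Longrightarrow> w \<in> V1 \<union> U2 \<Longrightarrow> w \<noteq> xs \<Longrightarrow> w = u" using tx u by blast
      from cases show "\<exists>x \<in> N \<alpha> \<inter> N xs. \<exists>y' \<in> N x. N y \<inter> U2 = {y'}"
      proof (elim disjE exE conjE)
        fix w assume "w \<in> N y" "w \<in> V1" "w \<noteq> xs"
        then show ?thesis using tx by auto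
      next
        fix w1 w2 assume "w1 \<noteq> w2" "w1 \<in> N y" "w2 \<in> N y" "w1 \<in> V1 \<union> U2" "w2 \<in> V1 \<union> U2" "w1 \<noteq> xs" "w2 \<noteq> xs"
        then show ?thesis using onlyu by metis
      next
        fix x w assume h: "E \<alpha> x" "E xs x" "E x w" "w \<in> N y" "w \<in> V1 \<union> U2" "w \<noteq> xs"
        then have "w = u" using onlyu by blast
        then show ?thesis using h u mN by blast
      qed
    qed
    ultimately show "\<omega> y \<ge> 3/2 \<and> (\<omega> y = 3/2 \<longrightarrow> (\<exists>x \<in> N \<alpha> \<inter> N xs. \<exists>y' \<in> N x. N y \<inter> U2 = {y'}))"
      by blast
  qed
  have part2: "\<forall>z \<in> U3. card (N z \<inter> (V - U3)) \<ge> 1 + card {x \<in> N \<alpha>. N z \<inter> N x \<inter> U2 \<noteq> {}}"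
  proof
    fix z assume zU3: "z \<in> U3"
    have zV: "z \<in> V" and znV1: "z \<notin> V1" and znU2: "z \<notin> U2" using zU3 unfolding U3_def by auto
    have zna: "z \<noteq> \<alpha>" "\<not> E \<alpha> z" using znV1 alV1 NaV1 mN by auto
    define X where "X = {x \<in> N \<alpha>. N z \<inter> N x \<inter> U2 \<noteq> {}}"
    define f where "f = (\<lambda>x. SOME u. u \<in> N z \<inter> N x \<inter> U2)"
    have fX: "\<And>x. x \<in> X \<Longrightarrow> f x \<in> N z \<inter> N x \<inter> U2"
      unfolding f_def X_def by (metis (mono_tags, lifting) ex_in_conv mem_Collect_eq someI_ex)
    have XN: "\<And>x. x \<in> X \<Longrightarrow> E \<alpha> x" unfolding X_def using mN by auto
    have finX: "finite X" unfolding X_def using finN by auto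
    have fxeq: "\<And>x x'. x \<in> X \<Longrightarrow> x' \<in> X \<Longrightarrow> f x = f x' \<Longrightarrow> x = x'"
    proof -
      fix x x' assume h: "x \<in> X" "x' \<in> X" "f x = f x'"
      have "f x \<in> U2" "E x (f x)" "E x' (f x)" using fX[OF h(1)] fX[OF h(2)] h(3) mN by auto
      then show "x = x'" using U2uniq XN h by blast
    qed
    have injf: "inj_on f X" using fxeq by (meson inj_onI)
    have fimg: "f ` X \<subseteq> N z \<inter> U2" using fX by blast
    have VU3: "V - U3 = V1 \<union> U2" unfolding U3_def using V1sub U2sub by auto
    have "\<exists>w. w \<in> N z \<and> w \<in> V1 \<union> U2 \<and> w \<notin> f ` X"
    proof -
      obtain a c b d e where ac: "(a = \<alpha> \<and> c = z) \<or> (a = z \<and> c = \<alpha>)" and dst: "distinct [a,b,c,d,e]"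
        and bV: "b \<in> V" and ed: "E b c" "E a d" "E a e" "E b d" "E b e"
        using sat_pair[OF sat alpha zV zna(1)[symmetric] zna(2)] by blast
      from ac show ?thesis
      proof
        assume h: "a = \<alpha> \<and> c = z"
        have "b \<in> V1" using twoV1[OF bV _ _ _ ed(4) ed(5)] h ed dst by auto
        moreover have "b \<in> N z" using ed h sym mN by auto
        moreover have "b \<notin> f ` X" using fimg notU2V1 \<open>b \<in> V1\<close> by blast
        ultimately show ?thesis by blast
      next
        assume h: "a = z \<and> c = \<alpha>"
        have dz: "d \<in> N z" "e \<in> N z" using ed h mN by auto
        have d12: "d \<in> V1 \<union> U2" "e \<in> V1 \<union> U2" using nbV12 ed h sym dst by auto
        have bN: "E \<alpha> b" using ed h sym by auto
        show ?thesis
        proof (cases "d \<in> f ` X \<and> e \<in> f ` X")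
          case True
          then obtain x x' where xx: "x \<in> X" "d = f x" "x' \<in> X" "e = f x'" by blast
          have "x = b" using U2uniq[of d x b] fX[OF xx(1)] xx bN XN ed h sym mN by auto
          moreover have "x' = b" using U2uniq[of e x' b] fX[OF xx(3)] xx bN XN ed h sym mN by auto
          ultimately have "d = e" using xx by simp
          with dst show ?thesis by simp
        next
          case False
          then show ?thesis using dz d12 by blast
        qed
      qed
    qed
    then obtain w where w: "w \<in> N z" "w \<in> V1 \<union> U2" "w \<notin> f ` X" by blast
    have sub: "insert w (f ` X) \<subseteq> N z \<inter> (V - U3)" using w fimg VU3 by blast
    have "card (insert w (f ` X)) = 1 + card X"
      using w(3) finX card_image[OF injf] by simp
    moreover have "card (insert w (f ` X)) \<le> card (N z \<inter> (V - U3))"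
      using card_mono[OF _ sub] finN by auto
    ultimately show "card (N z \<inter> (V - U3)) \<ge> 1 + card {x \<in> N \<alpha>. N z \<inter> N x \<inter> U2 \<noteq> {}}"
      unfolding X_def by simp
  qed
  show ?thesis unfolding Let_def
    using part1 part2 unfolding N_def V1_def U2_def U3_def \<omega>_def by blast
qed

end
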